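(* Let $L$ be a finite lattice and $h:L\to\mathbb{R}$ be submodular, i.e. $h(x)+h(y)\ge h(x\uplus y)+h(x\cap y)$ for all $x,y\in L$. Suppose $h$ is increasing at $\cap$-irreducible elements, i.e. $h(a)\ge h(c)$ whenever $c$ is $\cap$-irreducible and $a\supseteq c$. Then $h$ is increasing: $a\supseteq c$ implies $h(a)\ge h(c)$ for all $a,c\in L$.
   Context: Lattices have order $\supseteq$, meet $\cap$, join $\uplus$. An element $c$ is $\cap$-irreducible if $c=x\cap y$ implies $c=x$ or $c=y$, and $c$ is not the top element. *)

theory Defs
  imports Complex_Main
begin

text \<open>The paper's order \<supseteq> is rendered as Isabelle's \<le> reversed: "a \<supseteq> c" is "c \<le> a";
  meet \<inter> is inf, join \<uplus> is sup, top is top.\<close>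

definition meet_irreducible :: "'a::bounded_lattice \<Rightarrow> bool" where
  "meet_irreducible c \<longleftrightarrow> c \<noteq> top \<and> (\<forall>x y. c = inf x y \<longrightarrow> c = x \<or> c = y)"

end

theory Submission
  imports Defs
begin

theorem lemma8:
  fixes h :: "'a::{finite, bounded_lattice} \<Rightarrow> real"
  assumes submod: "\<And>x y. h x + h y \<ge> h (sup x y) + h (inf x y)"
    and incr_irr: "\<And>a c. meet_irreducible c \<Longrightarrow> c \<le> a \<Longrightarrow> h a \<ge> h c"
  shows "\<And>a c. c \<le> a \<Longrightarrow> h a \<ge> h c"
proof -
  have main: "\<forall>c. card {z. c < z} = n \<longrightarrow> (\<forall>a. c \<le> a \<longrightarrow> h a \<ge> h c)" for n
  proof (induction n rule: less_induct)
    case (less n)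
    show ?case
    proof (intro allI impI)
      fix c a :: 'a
      assume cn: "card {z. c < z} = n" and ca: "c \<le> a"
      have IH: "\<And>z b. c < z \<Longrightarrow> z \<le> b \<Longrightarrow> h b \<ge> h z"
      proof -
        fix z b assume cz: "c < z" and zb: "z \<le> b"
        have "{w. z < w} \<subset> {w. c < w}" using cz
          by (auto intro: less_trans)
        hence "card {w. z < w} < n" using cn by (metis finite psubset_card_mono)
        thus "h b \<ge> h z" using less zb by blast
      qed
      show "h a \<ge> h c"
      proof (cases "meet_irreducible c")
        case True thus ?thesis using incr_irr ca by blast
      next
        case False
        show ?thesis
        proof (cases "c = top")
          case True
          hence "a = c" using ca by (simp add: top_le)
          thus ?thesis by simp
        next
          case ct: False
          with False obtain x y where cxy: "c = inf x y" "c \<noteq> x" "c \<noteq> y"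
            unfolding meet_irreducible_def by blast
          have cx: "c < x" using cxy by (metis inf_le1 order_less_le)
          have cy: "c < y" using cxy by (metis inf_le2 order_less_le)
          define u where "u = inf a x"
          show ?thesis
          proof (cases "u = c")
            case True
            have "h a + h x \<ge> h (sup a x) + h c" using submod[of a x] True u_def by simp
            moreover have "h (sup a x) \<ge> h x" using IH[OF cx] by simp
            ultimately show ?thesis by linarith
          next
            case False
            have "c \<le> u" using ca cxy u_def by (simp add: le_infI2)
            hence cu: "c < u" using False by simp
            have "inf u y = c" using u_def cxy ca
              by (metis inf.absorb_iff2 inf.assoc inf.commute)
            hence "h u + h y \<ge> h (sup u y) + h c" using submod[of u y] by simp
            moreover have "h (sup u y) \<ge> h y" using IH[OF cy] by simp
            moreover have "h a \<ge> h u" using IH[OF cu] u_def by simp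
            ultimately show ?thesis by linarith
          qed
        qed
      qed
    qed
  qed
  fix a c :: 'a assume "c \<le> a"
  thus "h a \<ge> h c" using main by blast
qed

end
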